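(* Let $\kappa,\mu,\nu>0$ and $0<\gamma<\frac1{\kappa+4}$. Let $(a,b)\in\mathbb R^2\setminus\{0\}$ satisfy $|b|\ge\mu$ or $|a|^\kappa|b|\ge\nu$, and set, for $x\ge1$, $$f(x)=\big(bx^{\frac34+\gamma}-ax^{-\frac14}\big)^2\big(x^{\frac14-\frac1{\kappa+4}}\big)^2+\big(bx^{\frac14}\big)^2\big(x^{\frac14-\frac1{\kappa+4}}\big)^2.$$ Then for every $\rho$ with $0<\rho\le f(1)$ there exist $C,\epsilon_0>0$, depending only on $\rho,\kappa,\mu,\nu,\gamma$, such that $f$ is $(C,\tfrac12;\rho,\epsilon_0)$-good on $[1,\infty)$.
   Context: A function $f$ on $[1,\infty)$ is $(C,\alpha;\rho,\epsilon_0)$-good if for every $0<\epsilon<\epsilon_0$ and every interval $I=(x_1,x_2)\subset[1,\infty)$ with $|f(x_1)|=\rho$, one has $m(\{x\in I:|f(x)|\le\epsilon\})\le C(\epsilon/\rho)^\alpha m(I)$, where $m$ is Lebesgue measure. *)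

theory Defs
  imports "HOL-Analysis.Analysis"
begin

definition good :: "(real \<Rightarrow> real) \<Rightarrow> real \<Rightarrow> real \<Rightarrow> real \<Rightarrow> real \<Rightarrow> bool" where
  "good f C \<alpha> \<rho> \<epsilon>0 \<longleftrightarrow>
     (\<forall>\<epsilon> x1 x2. 0 < \<epsilon> \<and> \<epsilon> < \<epsilon>0 \<and> 1 \<le> x1 \<and> x1 < x2 \<and> \<bar>f x1\<bar> = \<rho> \<longrightarrow>
        measure lebesgue {x \<in> {x1<..<x2}. \<bar>f x\<bar> \<le> \<epsilon>}
          \<le> C * (\<epsilon> / \<rho>) powr \<alpha> * measure lebesgue {x1<..<x2})"

definition fab :: "real \<Rightarrow> real \<Rightarrow> real \<Rightarrow> real \<Rightarrow> real \<Rightarrow> real" where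
  "fab \<kappa> \<gamma> a b x =
     (b * x powr (3/4 + \<gamma>) - a * x powr (-1/4))\<^sup>2 * (x powr (1/4 - 1/(\<kappa>+4)))\<^sup>2
     + (b * x powr (1/4))\<^sup>2 * (x powr (1/4 - 1/(\<kappa>+4)))\<^sup>2"

end

theory Submission
  imports Defs "HOL-Analysis.Analysis"
begin


lemma sq_abs_le: "(u::real)\<^sup>2 \<le> e\<^sup>2 \<Longrightarrow> 0 \<le> e \<Longrightarrow> \<bar>u\<bar> \<le> e"
  by (rule power2_le_imp_le) simp_all

lemma fw_bounds:
  fixes w q G b p e :: real
  assumes "w > 0" "(w powr (-q) * G)\<^sup>2 + (b * w powr p)\<^sup>2 \<le> e\<^sup>2" "e > 0"
  shows "\<bar>G\<bar> \<le> e * w powr q" "\<bar>b\<bar> * w powr p \<le> e"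
proof -
  have "(w powr (-q) * G)\<^sup>2 \<le> e\<^sup>2" using assms(2) zero_le_power2[of "b * w powr p"] by linarith
  hence "\<bar>w powr (-q) * G\<bar> \<le> e" using assms(3) by (intro sq_abs_le) auto
  hence h: "w powr (-q) * \<bar>G\<bar> \<le> e" by (simp add: abs_mult)
  have "\<bar>G\<bar> = w powr q * (w powr (-q) * \<bar>G\<bar>)" using assms(1) by (simp add: powr_minus)
  also have "\<dots> \<le> w powr q * e" using h by (intro mult_left_mono) auto
  finally show "\<bar>G\<bar> \<le> e * w powr q" by (simp add: mult.commute)
  have "(b * w powr p)\<^sup>2 \<le> e\<^sup>2" using assms(2) zero_le_power2[of "w powr (-q) * G"] by linarith
  hence "\<bar>b * w powr p\<bar> \<le> e" using assms(3) by (intro sq_abs_le) auto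
  thus "\<bar>b\<bar> * w powr p \<le> e" by (simp add: abs_mult)
qed

lemma fx_bounds:
  fixes w q G b p e \<rho> :: real
  assumes "w > 0" "(w powr (-q) * G)\<^sup>2 + (b * w powr p)\<^sup>2 = \<rho>" "\<bar>b\<bar> * w powr p \<le> e" "e \<ge> 0" "e \<le> sqrt \<rho> / 8" "\<rho> > 0"
  shows "\<bar>G\<bar> \<le> sqrt \<rho> * w powr q" "sqrt \<rho> / 2 * w powr q \<le> \<bar>G\<bar>"
proof -
  have "\<bar>b * w powr p\<bar> \<le> sqrt \<rho> / 8" using assms(3,5) by (simp add: abs_mult)
  hence "\<bar>b * w powr p\<bar>\<^sup>2 \<le> (sqrt \<rho> / 8)\<^sup>2" by (intro power_mono) auto
  also have "\<dots> = \<rho> / 64" using assms by (simp add: power_divide)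
  finally have hb: "(b * w powr p)\<^sup>2 \<le> \<rho>/64" by simp
  have u0: "(w powr (-q) * G)\<^sup>2 \<le> \<rho>" using assms(2) zero_le_power2[of "b * w powr p"] by linarith
  have u: "(w powr (-q) * G)\<^sup>2 \<le> (sqrt \<rho>)\<^sup>2" using u0 assms(6) by simp
  have l: "(sqrt \<rho> / 2)\<^sup>2 \<le> \<bar>w powr (-q) * G\<bar>\<^sup>2" using assms(2,6) hb by (simp add: power_divide)
  have uu: "\<bar>w powr (-q) * G\<bar> \<le> sqrt \<rho>" using u assms(6) by (intro sq_abs_le) auto
  have ll: "sqrt \<rho> / 2 \<le> \<bar>w powr (-q) * G\<bar>" using l by (rule power2_le_imp_le) simp
  have eq: "\<bar>G\<bar> = w powr q * \<bar>w powr (-q) * G\<bar>" using assms(1) by (simp add: powr_minus abs_mult)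
  show "\<bar>G\<bar> \<le> sqrt \<rho> * w powr q" unfolding eq using mult_left_mono[OF uu, of "w powr q"] by (simp add: mult.commute)
  show "sqrt \<rho> / 2 * w powr q \<le> \<bar>G\<bar>" unfolding eq using mult_left_mono[OF ll, of "w powr q"] by (simp add: mult.commute)
qed


lemma pow_diff_upper:
  fixes s t g :: real
  assumes "0 < s" "s \<le> t" "0 < g" "g < 1"
  shows "t powr (1+g) - s powr (1+g) \<le> 2 * t powr g * (t - s)"
proof -
  have t0: "t > 0" using assms by linarith
  have "s powr (1+g) * t powr (1-g) \<ge> s powr (1+g) * s powr (1-g)"
    using assms by (intro mult_left_mono powr_mono2) auto
  also have "s powr (1+g) * s powr (1-g) = s^2"
    using assms by (simp add: powr_add[symmetric] power2_eq_square)
  finally have h: "s^2 \<le> s powr (1+g) * t powr (1-g)" .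
  have e1: "t powr (1+g) = t powr g * t" using t0 by (simp add: powr_add)
  have e2: "t powr (1-g) * t powr g = t" using t0 by (simp add: powr_add[symmetric])
  have "s^2 * t powr g \<le> s powr (1+g) * t" using h
    by (metis e2 mult.assoc mult_right_mono powr_ge_zero)
  hence "t powr (1+g) * t - s powr (1+g) * t \<le> t powr g * (t - s) * (t + s)"
    using e1 by (simp add: algebra_simps power2_eq_square)
  also have "\<dots> \<le> t powr g * (t - s) * (2*t)"
    using assms by (intro mult_left_mono) auto
  finally have "(t powr (1+g) - s powr (1+g)) * t \<le> (2 * t powr g * (t - s)) * t"
    by (simp add: algebra_simps)
  thus ?thesis using t0 by simp
qed

lemma pow_diff_lower:
  fixes s t g :: real
  assumes "0 < s" "s \<le> t" "0 < g"
  shows "s powr g * (t - s) \<le> t powr (1+g) - s powr (1+g)"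
proof -
  have "t powr (1+g) = t * t powr g" "s powr (1+g) = s * s powr g" using assms by (simp_all add: powr_add)
  moreover have "t * s powr g \<le> t * t powr g" using assms by (intro mult_left_mono powr_mono2) auto
  ultimately show ?thesis by (simp add: algebra_simps)
qed

lemma meas_bound:
  fixes S :: "real set"
  assumes "\<And>y z. y \<in> S \<Longrightarrow> z \<in> S \<Longrightarrow> \<bar>y - z\<bar> \<le> K * (y - x1)"
    "S \<subseteq> {x1<..<x2}" "K \<ge> 0" "x1 < x2"
  shows "measure lebesgue S \<le> 2*K*(x2-x1)"
proof (cases "S = {}")
  case True thus ?thesis using assms by auto
next
  case False
  then obtain y0 where y0: "y0 \<in> S" by auto
  have yx: "x1 < y0" "y0 < x2" using y0 assms(2) by auto
  have sub: "S \<subseteq> {y0 - K*(y0-x1) .. y0 + K*(y0-x1)}"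
    proof
    fix z assume "z \<in> S"
    from assms(1)[OF y0 this] show "z \<in> {y0 - K*(y0-x1) .. y0 + K*(y0-x1)}" by (auto simp: abs_le_iff)
  qed
  have "measure lebesgue S \<le> measure lebesgue {y0 - K*(y0-x1) .. y0 + K*(y0-x1)}"
  proof (cases "S \<in> sets lebesgue")
    case True thus ?thesis by (intro measure_mono_fmeasurable[OF sub]) auto
  next
    case False thus ?thesis by (simp add: measure_notin_sets)
  qed
  also have "\<dots> = 2*K*(y0-x1)" using yx assms by simp
  also have "\<dots> \<le> 2*K*(x2-x1)" using yx assms by (intro mult_left_mono) auto
  finally show ?thesis .
qed

lemma core:
  fixes \<kappa> \<nu> \<gamma> \<rho> a b e e0 q x1 y z D Y :: real
  assumes k: "\<kappa> > 0" and nu: "\<nu> > 0" and g0: "0 < \<gamma>" and g1: "\<gamma> < 1" and rho: "\<rho> > 0"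
    and q0: "0 < q" and q1: "q < 1/2" and qk: "q*(\<kappa>+1) < 1+\<gamma>"
    and hA: "\<nu> \<le> \<bar>a\<bar> powr \<kappa> * \<bar>b\<bar>"
    and x1: "1 \<le> x1" and xy: "x1 < y" and xz: "x1 < z"
    and fx1: "(x1 powr (-q) * (b*x1 powr (1+\<gamma>) - a))\<^sup>2 + (b*x1 powr (1/2-q))\<^sup>2 = \<rho>"
    and fy: "(y powr (-q) * (b*y powr (1+\<gamma>) - a))\<^sup>2 + (b*y powr (1/2-q))\<^sup>2 \<le> e\<^sup>2"
    and fz: "(z powr (-q) * (b*z powr (1+\<gamma>) - a))\<^sup>2 + (b*z powr (1/2-q))\<^sup>2 \<le> e\<^sup>2"
    and e0: "0 < e" and ee0: "e < e0"
    and e01: "e0 \<le> sqrt \<rho> / 8"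
    and e02: "3 * 2 powr \<kappa> * e0 powr (\<kappa>+1) \<le> \<nu>"
    and e03: "(4 * sqrt \<rho>) powr \<kappa> * Y powr (q*\<kappa>/D) * e0 \<le> \<nu>"
    and D: "D = 1+\<gamma>-q*(\<kappa>+1)" and Y: "Y = 3/2 * (4 * sqrt \<rho>) powr (\<kappa>+1) / \<nu>"
  shows "\<bar>y - z\<bar> \<le> 192 * (e / sqrt \<rho>) * (y - x1)"
proof -
  define A B where "A = \<bar>a\<bar>" and "B = \<bar>b\<bar>"
  have hA': "\<nu> \<le> A powr \<kappa> * B" using hA A_def B_def by simp
  have y1: "y \<ge> 1" "y > 0" and z1: "z \<ge> 1" "z > 0" and x10: "x1 > 0" using x1 xy xz by auto
  have Gy: "\<bar>b*y powr (1+\<gamma>) - a\<bar> \<le> e * y powr q" and By: "B * y powr (1/2-q) \<le> e"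
    using fw_bounds[OF y1(2) fy e0] B_def by auto
  have Gz: "\<bar>b*z powr (1+\<gamma>) - a\<bar> \<le> e * z powr q"
    using fw_bounds[OF z1(2) fz e0] by auto
  have "x1 powr (1/2-q) \<le> y powr (1/2-q)" using q1 xy x10 by (intro powr_mono2) auto
  hence Bx1: "\<bar>b\<bar> * x1 powr (1/2-q) \<le> e" using By B_def by (smt (verit) abs_ge_zero mult_left_mono)
  have G1u: "\<bar>b*x1 powr (1+\<gamma>) - a\<bar> \<le> sqrt \<rho> * x1 powr q"
   and G1l: "sqrt \<rho>/2 * x1 powr q \<le> \<bar>b*x1 powr (1+\<gamma>) - a\<bar>"
    using fx_bounds[OF x10 fx1 Bx1] e0 ee0 e01 rho by auto
  have Bpos: "B > 0"
  proof (rule ccontr)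
    assume "\<not> B > 0" hence "b = 0" using B_def by auto
    thus False using hA nu by simp
  qed
  have Apos: "A > 0"
  proof (rule ccontr)
    assume "\<not> A > 0" hence "a = 0" using A_def by auto
    thus False using hA nu k by simp
  qed
  have Be: "B \<le> e"
  proof -
    have "1 \<le> y powr (1/2-q)" using y1 q1 by (simp add: ge_one_powr_ge_zero)
    thus ?thesis using By Bpos by (smt (verit) mult_le_cancel_left1)
  qed
  have step1: "A \<ge> 2*e*w powr q" if w1: "w \<ge> 1" and Gw: "\<bar>b*w powr (1+\<gamma>) - a\<bar> \<le> e*w powr q" for w
  proof (rule ccontr)
    assume "\<not> A \<ge> 2*e*w powr q"
    hence Al: "A < 2*e*w powr q" by simp
    have w0: "w > 0" using w1 by simp
    have "B * w powr (1+\<gamma>) = \<bar>b*w powr (1+\<gamma>)\<bar>" using B_def by (simp add: abs_mult)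
    also have "\<dots> \<le> \<bar>b*w powr (1+\<gamma>) - a\<bar> + A" using A_def by linarith
    finally have Bw: "B * w powr (1+\<gamma>) \<le> 3*e*w powr q" using Gw Al by linarith
    have wpos: "w powr (1+\<gamma>) > 0" using w0 by simp
    have Bb: "B \<le> 3*e*w powr q / w powr (1+\<gamma>)" using Bw wpos by (simp add: field_simps)
    have "A powr \<kappa> \<le> (2*e*w powr q) powr \<kappa>" using Al Apos k by (intro powr_mono2) auto
    also have "\<dots> = 2 powr \<kappa> * e powr \<kappa> * w powr (q*\<kappa>)"
      using e0 w0 by (simp add: powr_mult powr_powr)
    finally have Ak: "A powr \<kappa> \<le> 2 powr \<kappa> * e powr \<kappa> * w powr (q*\<kappa>)" .
    have "A powr \<kappa> * B \<le> (2 powr \<kappa> * e powr \<kappa> * w powr (q*\<kappa>)) * (3*e*w powr q / w powr (1+\<gamma>))"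
      using Ak Bb Bpos by (intro mult_mono) auto
    also have "\<dots> = 3 * 2 powr \<kappa> * (e powr \<kappa> * e) * ((w powr (q*\<kappa>) * w powr q) / w powr (1+\<gamma>))"
      by (simp add: field_simps)
    also have "e powr \<kappa> * e = e powr (\<kappa>+1)" using e0 by (simp add: powr_add)
    also have "w powr (q*\<kappa>) * w powr q = w powr (q*(\<kappa>+1))" using w0 by (simp add: powr_add[symmetric] algebra_simps)
    also have "w powr (q*(\<kappa>+1)) / w powr (1+\<gamma>) \<le> 1"
      using w1 qk wpos by (simp add: powr_mono)
    hence "3 * 2 powr \<kappa> * e powr (\<kappa>+1) * (w powr (q*(\<kappa>+1)) / w powr (1+\<gamma>)) \<le> 3 * 2 powr \<kappa> * e powr (\<kappa>+1)"
      by (intro mult_left_le) auto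
    also have "3 * 2 powr \<kappa> * e powr (\<kappa>+1) < 3 * 2 powr \<kappa> * e0 powr (\<kappa>+1)"
      using e0 ee0 k by (simp add: powr_less_mono2)
    finally show False using e02 hA' by linarith
  qed
  have step2: "A/2 \<le> B*w powr (1+\<gamma>) \<and> B*w powr (1+\<gamma>) \<le> 3*A/2"
    if w1: "w \<ge> 1" and Gw: "\<bar>b*w powr (1+\<gamma>) - a\<bar> \<le> e*w powr q" for w
  proof -
    have "B * w powr (1+\<gamma>) = \<bar>b*w powr (1+\<gamma>)\<bar>" using B_def by (simp add: abs_mult)
    moreover have "\<bar>b*w powr (1+\<gamma>)\<bar> \<le> \<bar>b*w powr (1+\<gamma>) - a\<bar> + A" using A_def by linarith
    moreover have "A \<le> \<bar>b*w powr (1+\<gamma>) - a\<bar> + \<bar>b*w powr (1+\<gamma>)\<bar>" using A_def by linarith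
    moreover have "A \<ge> 2*e*w powr q" using step1[OF w1 Gw] .
    ultimately show ?thesis using Gw by linarith
  qed
  have sy: "A/2 \<le> B*y powr (1+\<gamma>)" "B*y powr (1+\<gamma>) \<le> 3*A/2" using step2[OF y1(1) Gy] by auto
  have sz: "A/2 \<le> B*z powr (1+\<gamma>)" "B*z powr (1+\<gamma>) \<le> 3*A/2" using step2[OF z1(1) Gz] by auto
  have ratio: "u \<le> 3 * v" if "A/2 \<le> B * v powr (1+\<gamma>)" "B * u powr (1+\<gamma>) \<le> 3*A/2" "v > 0" "u > 0" for u v
  proof (rule ccontr)
    assume "\<not> u \<le> 3 * v"
    hence "(3 * v) powr (1+\<gamma>) < u powr (1+\<gamma>)" using that g0 by (intro powr_less_mono2) auto
    moreover have "(3 * v) powr (1+\<gamma>) = 3 powr (1+\<gamma>) * v powr (1+\<gamma>)" using that by (simp add: powr_mult)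
    moreover have "3 powr (1+\<gamma>) \<ge> 3" using g0 by (smt (verit) powr_mono powr_one)
    moreover have "3 * v powr (1+\<gamma>) \<le> 3 powr (1+\<gamma>) * v powr (1+\<gamma>)"
      using \<open>3 powr (1+\<gamma>) \<ge> 3\<close> by (intro mult_right_mono) auto
    ultimately have "3 * v powr (1+\<gamma>) < u powr (1+\<gamma>)" by linarith
    hence "B * (3 * v powr (1+\<gamma>)) < B * u powr (1+\<gamma>)" using Bpos by simp
    thus False using that by linarith
  qed
  have yz: "y \<le> 3*z" using ratio[OF sz(1) sy(2) z1(2) y1(2)] .
  have zy: "z \<le> 3*y" using ratio[OF sy(1) sz(2) y1(2) z1(2)] .
  have step3: "y \<le> 2*x1"
  proof (rule ccontr)
    assume "\<not> y \<le> 2*x1" hence xl: "x1 < y/2" by simp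
    have "x1 powr (1+\<gamma>) \<le> (y/2) powr (1+\<gamma>)" using xl x10 g0 by (intro powr_mono2) auto
    also have "(y/2) powr (1+\<gamma>) = y powr (1+\<gamma>) / 2 powr (1+\<gamma>)" using y1 by (simp add: powr_divide)
    also have "\<dots> \<le> y powr (1+\<gamma>) / 2"
    proof -
      have "2 powr 1 \<le> 2 powr (1+\<gamma>)" using g0 by (intro powr_mono) auto
      hence "2 \<le> 2 powr (1+\<gamma>)" by simp
      thus ?thesis by (intro divide_left_mono) auto
    qed
    finally have xp: "x1 powr (1+\<gamma>) \<le> y powr (1+\<gamma>) / 2" .
    have "B * x1 powr (1+\<gamma>) \<le> B * (y powr (1+\<gamma>) / 2)" using xp Bpos by (intro mult_left_mono) auto
    hence Bx: "B * x1 powr (1+\<gamma>) \<le> 3*A/4" using sy(2) by simp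
    have "\<bar>b*x1 powr (1+\<gamma>)\<bar> = B * x1 powr (1+\<gamma>)" using B_def by (simp add: abs_mult)
    hence "A - B*x1 powr (1+\<gamma>) \<le> \<bar>b*x1 powr (1+\<gamma>) - a\<bar>" using A_def by linarith
    hence "A/4 \<le> sqrt \<rho> * x1 powr q" using G1u Bx by linarith
    moreover have "x1 powr q \<le> y powr q" using x10 xy q0 by (intro powr_mono2) auto
    moreover have "sqrt \<rho> * x1 powr q \<le> sqrt \<rho> * y powr q" using calculation(2) rho by (intro mult_left_mono) auto
    ultimately have A4: "A \<le> 4 * sqrt \<rho> * y powr q" by linarith
    have yp: "y powr (1+\<gamma>) > 0" using y1 by simp
    have Bb: "B \<le> (3*A/2) / y powr (1+\<gamma>)" using sy(2) yp by (simp add: field_simps)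
    have "\<nu> \<le> A powr \<kappa> * B" using hA' .
    also have "\<dots> \<le> A powr \<kappa> * ((3*A/2) / y powr (1+\<gamma>))" using Bb by (intro mult_left_mono) auto
    also have "\<dots> = 3/2 * (A powr \<kappa> * A) / y powr (1+\<gamma>)" by simp
    also have "A powr \<kappa> * A = A powr (\<kappa>+1)" using Apos by (simp add: powr_add)
    also have "3/2 * A powr (\<kappa>+1) / y powr (1+\<gamma>) \<le> 3/2 * (4 * sqrt \<rho> * y powr q) powr (\<kappa>+1) / y powr (1+\<gamma>)"
      using A4 Apos k yp by (intro divide_right_mono mult_left_mono powr_mono2) auto
    also have "(4 * sqrt \<rho> * y powr q) powr (\<kappa>+1) = (4 * sqrt \<rho>) powr (\<kappa>+1) * y powr (q*(\<kappa>+1))"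
      using rho y1 by (simp add: powr_mult powr_powr)
    finally have "\<nu> \<le> 3/2 * (4 * sqrt \<rho>) powr (\<kappa>+1) * (y powr (q*(\<kappa>+1)) / y powr (1+\<gamma>))" by simp
    also have "y powr (q*(\<kappa>+1)) / y powr (1+\<gamma>) = 1 / y powr D"
      using y1 D by (simp add: powr_diff)
    finally have "\<nu> * y powr D \<le> 3/2 * (4 * sqrt \<rho>) powr (\<kappa>+1)" using y1 by (simp add: field_simps)
    moreover have "\<nu> * Y = 3/2 * (4 * sqrt \<rho>) powr (\<kappa>+1)" using Y nu by simp
    ultimately have "\<nu> * y powr D \<le> \<nu> * Y" by linarith
    hence yD: "y powr D \<le> Y" using nu by simp
    have Dpos: "D > 0" using D qk by simp
    have "y powr (q*\<kappa>) = (y powr D) powr (q*\<kappa>/D)" using Dpos by (simp add: powr_powr)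
    also have "\<dots> \<le> Y powr (q*\<kappa>/D)" using yD Dpos q0 k by (intro powr_mono2) auto
    finally have yqk: "y powr (q*\<kappa>) \<le> Y powr (q*\<kappa>/D)" .
    have "\<nu> \<le> A powr \<kappa> * B" using hA' .
    also have "\<dots> \<le> (4 * sqrt \<rho> * y powr q) powr \<kappa> * e" using A4 Apos k Be Bpos by (intro mult_mono powr_mono2) auto
    also have "(4 * sqrt \<rho> * y powr q) powr \<kappa> = (4 * sqrt \<rho>) powr \<kappa> * y powr (q*\<kappa>)"
      using rho y1 by (simp add: powr_mult powr_powr)
    also have "(4 * sqrt \<rho>) powr \<kappa> * y powr (q*\<kappa>) * e \<le> (4 * sqrt \<rho>) powr \<kappa> * Y powr (q*\<kappa>/D) * e"
      using yqk e0 by (intro mult_right_mono mult_left_mono) auto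
    also have "\<dots> < (4 * sqrt \<rho>) powr \<kappa> * Y powr (q*\<kappa>/D) * e0"
    proof -
      have "Y > 0" using Y nu rho by simp
      hence "(4 * sqrt \<rho>) powr \<kappa> * Y powr (q*\<kappa>/D) > 0" using rho by simp
      thus ?thesis using ee0 mult_strict_left_mono by blast
    qed
    finally show False using e03 by linarith
  qed
  have eb: "e \<le> sqrt \<rho> / 8" using ee0 e01 by linarith
  have x1y: "y powr q / 2 \<le> x1 powr q"
  proof -
    have "y powr q \<le> (2*x1) powr q" using step3 y1 q0 by (intro powr_mono2) auto
    also have "\<dots> = 2 powr q * x1 powr q" using x10 by (simp add: powr_mult)
    also have "2 powr q \<le> 2 powr 1" using q1 by (intro powr_mono) auto
    hence "2 powr q * x1 powr q \<le> 2 * x1 powr q" by (intro mult_right_mono) auto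
    finally show ?thesis by simp
  qed
  have Pdef: "B * y powr \<gamma> > 0" using Bpos y1 by simp
  have low: "sqrt \<rho> * y powr q / 16 \<le> B * y powr \<gamma> * (y - x1)"
  proof -
    have "(b*y powr (1+\<gamma>) - a) - (b*x1 powr (1+\<gamma>) - a) = b * (y powr (1+\<gamma>) - x1 powr (1+\<gamma>))"
      by (simp add: algebra_simps)
    hence "\<bar>b*x1 powr (1+\<gamma>) - a\<bar> - \<bar>b*y powr (1+\<gamma>) - a\<bar> \<le> B * \<bar>y powr (1+\<gamma>) - x1 powr (1+\<gamma>)\<bar>"
    proof -
      have "\<bar>b*x1 powr (1+\<gamma>) - a\<bar> - \<bar>b*y powr (1+\<gamma>) - a\<bar> \<le> \<bar>(b*y powr (1+\<gamma>) - a) - (b*x1 powr (1+\<gamma>) - a)\<bar>" by arith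
      thus ?thesis unfolding \<open>(b*y powr (1+\<gamma>) - a) - (b*x1 powr (1+\<gamma>) - a) = b * (y powr (1+\<gamma>) - x1 powr (1+\<gamma>))\<close> B_def abs_mult .
    qed
    also have "\<bar>y powr (1+\<gamma>) - x1 powr (1+\<gamma>)\<bar> = y powr (1+\<gamma>) - x1 powr (1+\<gamma>)"
      using xy x10 g0 by (simp add: powr_mono2)
    also have "B * \<dots> \<le> B * (2 * y powr \<gamma> * (y - x1))"
      using pow_diff_upper[OF x10 _ g0 g1, of y] xy Bpos by (intro mult_left_mono) auto
    finally have h: "sqrt \<rho>/2 * x1 powr q - e * y powr q \<le> B * (2 * y powr \<gamma> * (y - x1))"
      using G1l Gy by linarith
    have "sqrt \<rho>/2 * (y powr q / 2) \<le> sqrt \<rho>/2 * x1 powr q" using x1y rho by (intro mult_left_mono) auto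
    moreover have "e * y powr q \<le> sqrt \<rho> / 8 * y powr q" using eb by (intro mult_right_mono) auto
    ultimately show ?thesis using h by (simp add: algebra_simps)
  qed
  have up: "B * y powr \<gamma> * \<bar>y - z\<bar> \<le> 12 * e * y powr q"
  proof -
    have "(b*y powr (1+\<gamma>) - a) - (b*z powr (1+\<gamma>) - a) = b * (y powr (1+\<gamma>) - z powr (1+\<gamma>))"
      by (simp add: algebra_simps)
    hence hs: "B * \<bar>y powr (1+\<gamma>) - z powr (1+\<gamma>)\<bar> \<le> e * y powr q + e * z powr q"
    proof -
      have "\<bar>(b*y powr (1+\<gamma>) - a) - (b*z powr (1+\<gamma>) - a)\<bar> \<le> \<bar>b*y powr (1+\<gamma>) - a\<bar> + \<bar>b*z powr (1+\<gamma>) - a\<bar>" by arith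
      also have "\<dots> \<le> e * y powr q + e * z powr q" using Gy Gz by linarith
      finally show ?thesis unfolding \<open>(b*y powr (1+\<gamma>) - a) - (b*z powr (1+\<gamma>) - a) = b * (y powr (1+\<gamma>) - z powr (1+\<gamma>))\<close> B_def abs_mult .
    qed
    have z3: "z powr q \<le> 3 * y powr q"
    proof -
      have "z powr q \<le> (3*y) powr q" using zy z1 q0 by (intro powr_mono2) auto
      also have "\<dots> = 3 powr q * y powr q" using y1 by (simp add: powr_mult)
      also have "3 powr q \<le> 3 powr 1" using q1 by (intro powr_mono) auto
      hence "3 powr q * y powr q \<le> 3 * y powr q" by (intro mult_right_mono) auto
      finally show ?thesis .
    qed
    have h1: "B * \<bar>y powr (1+\<gamma>) - z powr (1+\<gamma>)\<bar> \<le> 4 * e * y powr q"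
    proof -
      have "e * z powr q \<le> e * (3 * y powr q)" using z3 e0 by (intro mult_left_mono) auto
      thus ?thesis using hs by (simp add: algebra_simps)
    qed
    have y3: "y powr \<gamma> / 3 \<le> (y/3) powr \<gamma>"
    proof -
      have "3 powr \<gamma> \<le> 3 powr 1" using g1 by (intro powr_mono) auto
      hence "y powr \<gamma> / 3 \<le> y powr \<gamma> / 3 powr \<gamma>" by (intro divide_left_mono) auto
      thus ?thesis using y1 by (simp add: powr_divide)
    qed
    have h2: "y powr \<gamma> / 3 * \<bar>y - z\<bar> \<le> \<bar>y powr (1+\<gamma>) - z powr (1+\<gamma>)\<bar>"
    proof (cases "y \<le> z")
      case True
      have "y powr \<gamma> / 3 * \<bar>y - z\<bar> \<le> y powr \<gamma> * (z - y)" using True by simp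
      also have "\<dots> \<le> z powr (1+\<gamma>) - y powr (1+\<gamma>)" using pow_diff_lower[OF y1(2) True g0] .
      finally show ?thesis by arith
    next
      case False
      have "(y/3) powr \<gamma> \<le> z powr \<gamma>" using yz g0 y1 by (intro powr_mono2) auto
      hence "y powr \<gamma> / 3 \<le> z powr \<gamma>" using y3 by linarith
      hence "y powr \<gamma> / 3 * \<bar>y - z\<bar> \<le> z powr \<gamma> * (y - z)" using False by (intro mult_mono) auto
      also have "\<dots> \<le> y powr (1+\<gamma>) - z powr (1+\<gamma>)" using pow_diff_lower[OF z1(2) _ g0, of y] False by simp
      finally show ?thesis by arith
    qed
    have "B * (y powr \<gamma> / 3 * \<bar>y - z\<bar>) \<le> B * \<bar>y powr (1+\<gamma>) - z powr (1+\<gamma>)\<bar>"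
      using h2 Bpos by (intro mult_left_mono) auto
    with h1 show ?thesis by (simp add: algebra_simps)
  qed
  define P where "P = B * y powr \<gamma>"
  have P0: "P > 0" using Pdef P_def by simp
  have "P * (sqrt \<rho> * \<bar>y - z\<bar>) = sqrt \<rho> * (P * \<bar>y - z\<bar>)" by simp
  also have "\<dots> \<le> sqrt \<rho> * (12 * e * y powr q)" using up P_def rho by (intro mult_left_mono) auto
  also have "\<dots> = 192 * e * (sqrt \<rho> * y powr q / 16)" by simp
  also have "\<dots> \<le> 192 * e * (P * (y - x1))" using low P_def e0 by (intro mult_left_mono) auto
  finally have "P * (sqrt \<rho> * \<bar>y - z\<bar>) \<le> P * (192 * e * (y - x1))" by (simp add: algebra_simps)
  hence "sqrt \<rho> * \<bar>y - z\<bar> \<le> 192 * e * (y - x1)" using P0 by simp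
  thus ?thesis using rho by (simp add: field_simps)
qed


lemma fab_eq:
  assumes "x > 0" "q = 1/(\<kappa>+4)"
  shows "fab \<kappa> \<gamma> a b x = (x powr (-q) * (b * x powr (1+\<gamma>) - a))\<^sup>2 + (b * x powr (1/2 - q))\<^sup>2"
proof -
  have 1: "(b * x powr (3/4 + \<gamma>) - a * x powr (-1/4)) * x powr (1/4 - 1/(\<kappa>+4)) = x powr (-q) * (b * x powr (1+\<gamma>) - a)"
    using assms by (simp add: algebra_simps powr_add[symmetric])
  have 2: "(b * x powr (1/4)) * x powr (1/4 - 1/(\<kappa>+4)) = b * x powr (1/2 - q)"
    using assms by (simp add: algebra_simps powr_add[symmetric])
  show ?thesis unfolding fab_def power_mult_distrib[symmetric] 1 2 ..
qed

theorem lemma4p1: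
  fixes \<kappa> \<mu> \<nu> \<gamma> \<rho> :: real
  assumes "\<kappa> > 0" "\<mu> > 0" "\<nu> > 0" "0 < \<gamma>" "\<gamma> < 1 / (\<kappa> + 4)" "\<rho> > 0"
  shows "\<exists>C \<epsilon>0. C > 0 \<and> \<epsilon>0 > 0 \<and>
    (\<forall>a b :: real. (a, b) \<noteq> (0, 0) \<and> (\<bar>b\<bar> \<ge> \<mu> \<or> \<bar>a\<bar> powr \<kappa> * \<bar>b\<bar> \<ge> \<nu>)
        \<and> \<rho> \<le> fab \<kappa> \<gamma> a b 1
      \<longrightarrow> good (fab \<kappa> \<gamma> a b) C (1/2) \<rho> \<epsilon>0)"
proof -
  note k = assms(1) and mu = assms(2) and nu = assms(3) and g0 = assms(4) and rho = assms(6)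
  define q where "q = 1/(\<kappa>+4)"
  define D where "D = 1+\<gamma>-q*(\<kappa>+1)"
  define Y where "Y = 3/2 * (4 * sqrt \<rho>) powr (\<kappa>+1) / \<nu>"
  define W where "W = \<nu> / (3 * 2 powr \<kappa>)"
  define K where "K = (4 * sqrt \<rho>) powr \<kappa> * Y powr (q*\<kappa>/D)"
  define e0 where "e0 = min (min (sqrt \<rho> / 8) \<mu>) (min (W powr (1/(\<kappa>+1))) (\<nu> / K))"
  have q0: "0 < q" and q1: "q < 1/2" using k by (simp_all add: q_def)
  have qk1: "(\<kappa>+1)/(\<kappa>+4) < 1" using k by simp
  have qk2: "q*(\<kappa>+1) = (\<kappa>+1)/(\<kappa>+4)" by (simp add: q_def)
  have qk: "q*(\<kappa>+1) < 1+\<gamma>" using qk1 qk2 g0 by linarith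
  have g1: "\<gamma> < 1" using assms(5) k by (smt (verit) le_divide_eq_1_pos)
  have Ypos: "Y > 0" using Y_def rho nu by simp
  have Kpos: "K > 0" using K_def Ypos rho by simp
  have Wpos: "W > 0" using W_def nu by simp
  have e0pos: "e0 > 0" using e0_def rho mu Wpos Kpos nu by simp
  have e01: "e0 \<le> sqrt \<rho> / 8" and e0mu: "e0 \<le> \<mu>" unfolding e0_def by linarith+
  have e02: "3 * 2 powr \<kappa> * e0 powr (\<kappa>+1) \<le> \<nu>"
  proof -
    have "e0 \<le> W powr (1/(\<kappa>+1))" using e0_def by auto
    hence "e0 powr (\<kappa>+1) \<le> (W powr (1/(\<kappa>+1))) powr (\<kappa>+1)" using e0pos k by (intro powr_mono2) auto
    also have "\<dots> = W" using Wpos k by (simp add: powr_powr)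
    finally have "e0 powr (\<kappa>+1) \<le> W" .
    hence "3 * 2 powr \<kappa> * e0 powr (\<kappa>+1) \<le> 3 * 2 powr \<kappa> * W" by (intro mult_left_mono) auto
    thus ?thesis using W_def by simp
  qed
  have e03: "(4 * sqrt \<rho>) powr \<kappa> * Y powr (q*\<kappa>/D) * e0 \<le> \<nu>"
  proof -
    have "e0 \<le> \<nu> / K" using e0_def by auto
    hence "K * e0 \<le> \<nu>" using Kpos by (simp add: field_simps)
    thus ?thesis using K_def by simp
  qed
  have main: "good (fab \<kappa> \<gamma> a b) 384 (1/2) \<rho> (e0\<^sup>2)"
    if H: "(a, b) \<noteq> (0, 0) \<and> (\<mu> \<le> \<bar>b\<bar> \<or> \<nu> \<le> \<bar>a\<bar> powr \<kappa> * \<bar>b\<bar>) \<and> \<rho> \<le> fab \<kappa> \<gamma> a b 1" for a b :: real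
  proof -
    show "good (fab \<kappa> \<gamma> a b) 384 (1/2) \<rho> (e0\<^sup>2)"
      unfolding good_def
    proof (intro allI impI)
      fix \<epsilon> x1 x2 :: real
      assume E: "0 < \<epsilon> \<and> \<epsilon> < e0\<^sup>2 \<and> 1 \<le> x1 \<and> x1 < x2 \<and> \<bar>fab \<kappa> \<gamma> a b x1\<bar> = \<rho>"
      define e where "e = sqrt \<epsilon>"
      define S where "S = {x \<in> {x1<..<x2}. \<bar>fab \<kappa> \<gamma> a b x\<bar> \<le> \<epsilon>}"
      have epos: "e > 0" using E e_def by simp
      have ee0: "e < e0" using E e_def e0pos by (metis real_sqrt_abs real_sqrt_less_mono abs_of_pos)
      have eps: "\<epsilon> = e\<^sup>2" using E e_def by simp
      have x10: "x1 > 0" using E by simp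
      have mI: "measure lebesgue {x1<..<x2} = x2 - x1" using E by simp
      have pw: "(\<epsilon>/\<rho>) powr (1/2) = e / sqrt \<rho>"
        using E rho e_def by (simp add: powr_half_sqrt real_sqrt_divide)
      have fS: "\<And>y. y \<in> S \<Longrightarrow> x1 < y \<and> (y powr (-q) * (b*y powr (1+\<gamma>) - a))\<^sup>2 + (b*y powr (1/2-q))\<^sup>2 \<le> e\<^sup>2"
      proof -
        fix y assume "y \<in> S"
        hence y: "x1 < y" "\<bar>fab \<kappa> \<gamma> a b y\<bar> \<le> \<epsilon>" using S_def by auto
        have "fab \<kappa> \<gamma> a b y = (y powr (-q) * (b*y powr (1+\<gamma>) - a))\<^sup>2 + (b*y powr (1/2-q))\<^sup>2"
          using fab_eq[of y q \<kappa> \<gamma> a b] y(1) x10 q_def by simp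
        thus "x1 < y \<and> (y powr (-q) * (b*y powr (1+\<gamma>) - a))\<^sup>2 + (b*y powr (1/2-q))\<^sup>2 \<le> e\<^sup>2"
          using y eps by simp
      qed
      show "measure lebesgue S \<le> 384 * (\<epsilon>/\<rho>) powr (1/2) * measure lebesgue {x1<..<x2}"
        unfolding S_def[symmetric]
      proof (cases "\<mu> \<le> \<bar>b\<bar>")
        case True
        have "S = {}"
        proof (rule ccontr)
          assume "S \<noteq> {}"
          then obtain y where yS: "y \<in> S" by auto
          have y1: "y \<ge> 1" "y > 0" using fS[OF yS] E by auto
          have "\<bar>b\<bar> * y powr (1/2-q) \<le> e" using fw_bounds(2)[OF y1(2) _ epos] fS[OF yS] by blast
          moreover have "1 \<le> y powr (1/2-q)" using y1 q1 by (simp add: ge_one_powr_ge_zero)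
          ultimately have "\<bar>b\<bar> \<le> e" using mu True by (smt (verit) mult_le_cancel_left1)
          thus False using True ee0 e0mu by linarith
        qed
        thus ?thesis using mI E rho by simp
      next
        case False
        hence hA: "\<nu> \<le> \<bar>a\<bar> powr \<kappa> * \<bar>b\<bar>" using H by auto
        have fx1: "(x1 powr (-q) * (b*x1 powr (1+\<gamma>) - a))\<^sup>2 + (b*x1 powr (1/2-q))\<^sup>2 = \<rho>"
        proof -
          have "fab \<kappa> \<gamma> a b x1 = (x1 powr (-q) * (b*x1 powr (1+\<gamma>) - a))\<^sup>2 + (b*x1 powr (1/2-q))\<^sup>2"
            using fab_eq[of x1 q \<kappa> \<gamma> a b] x10 q_def by simp
          moreover have "fab \<kappa> \<gamma> a b x1 \<ge> 0" using calculation by simp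
          ultimately show ?thesis using E by simp
        qed
        have "measure lebesgue S \<le> 2 * (192 * (e / sqrt \<rho>)) * (x2 - x1)"
        proof (rule meas_bound)
          fix y z assume yS: "y \<in> S" and zS: "z \<in> S"
          show "\<bar>y - z\<bar> \<le> 192 * (e / sqrt \<rho>) * (y - x1)"
            using core[OF k nu g0 g1 rho q0 q1 qk hA _ _ _ fx1 _ _ epos ee0 e01 e02 e03 D_def Y_def]
              fS[OF yS] fS[OF zS] E by blast
        next
          show "S \<subseteq> {x1<..<x2}" using S_def by auto
          show "0 \<le> 192 * (e / sqrt \<rho>)" using epos rho by simp
          show "x1 < x2" using E by simp
        qed
        thus ?thesis using mI pw by simp
      qed
    qed
  qed
  show ?thesis
    apply (rule exI[of _ 384], rule exI[of _ "e0\<^sup>2"])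
    using main e0pos by auto
qed
end
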